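(* Let $(\sigma_i)_{i\in\mathbb{N}}$ be i.i.d. copies of $\sigma_0$. Fix $k\in\mathbb{N}$ and let $(\ell_i)$, $(\delta_i)$ be positive sequences with $\ell_i\to\infty$. Then there exists $c>0$ such that, for all sufficiently large $i$, \[ \mathbf{P}\big(S_i^{(k)}>\ell_i\delta_i\,\big|\,\sigma_1,\dots,\sigma_i\le\ell_i\big)<c\,\delta_i^{-1}\,i^k\,\mathbf{E}\Big[\Big(\frac{\sigma_0}{\ell_i}\Big)^{1/k}\mathbf{1}_{\{\sigma_0\le\ell_i\}}\Big]^k. \]
   Context: $\sigma_0$ is a strictly positive random variable under $\mathbf{P}$ with $L(u):=1/\mathbf{P}(\sigma_0>u)$ slowly varying ($\lim_{u\to\infty}L(uv)/L(u)=1$ for all $v>0$). For an index $i$, let $\sigma_i^{(1)}\ge\sigma_i^{(2)}\ge\dots\ge\sigma_i^{(i)}$ be the descending order statistics of $(\sigma_j)_{1\le j\le i}$, and $S_i^{(k)}:=\sum_{j=k}^{i}\sigma_i^{(j)}$ (the sum with the $k-1$ largest terms removed). *)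

theory Defs
  imports "HOL-Probability.Probability"
begin

definition trimmed_sum :: "nat \<Rightarrow> real list \<Rightarrow> real" where
  "trimmed_sum k xs = sum_list (drop (k - 1) (rev (sort xs)))"

definition S_trim :: "(nat \<Rightarrow> 'a \<Rightarrow> real) \<Rightarrow> nat \<Rightarrow> nat \<Rightarrow> 'a \<Rightarrow> real" where
  "S_trim \<sigma> i k \<omega> = trimmed_sum k (map (\<lambda>j. \<sigma> j \<omega>) [1..<Suc i])"

definition slowly_varying :: "(real \<Rightarrow> real) \<Rightarrow> bool" where
  "slowly_varying L \<longleftrightarrow> (\<forall>v>0. ((\<lambda>u. L (u * v) / L u) \<longlongrightarrow> 1) at_top)"

end

theory Submission
  imports Defs
begin

lemma sort_map_key: "sort (map f xs) = map f (sort_key f xs)"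
  by (rule properties_for_sort) (simp_all add: sorted_sort_key)

lemma trim_comb:
  fixes x :: "nat \<Rightarrow> real" and l :: real
  assumes k: "k \<ge> 1" and l: "l > 0" and xb: "\<And>j. j \<in> {1..i} \<Longrightarrow> 0 \<le> x j \<and> x j \<le> l"
  shows "sum_list (drop (k - 1) (rev (sort (map x [1..<Suc i]))))
     \<le> l * (\<Sum>T\<in>{T. T \<subseteq> {1..i} \<and> card T = k}. \<Prod>j\<in>T. (x j / l) powr (1 / real k))"
proof -
  define js where "js = sort_key x [1..<Suc i]"
  define a where "a = i - (k - 1)"
  define u where "u j = (x j / l) powr (1 / real k)" for j
  have setjs: "set js = {1..i}" and djs: "distinct js" and ljs: "length js = i"
    unfolding js_def by (auto simp: distinct_sort)
  have srt: "sorted (map x js)" unfolding js_def by (rule sorted_sort_key)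
  have "sum_list (drop (k - 1) (rev (sort (map x [1..<Suc i]))))
      = sum_list (take a (map x js))"
    by (simp add: drop_rev sort_map_key js_def a_def)
  also have "\<dots> = sum x (set (take a js))"
    by (simp add: take_map sum_list_distinct_conv_sum_set djs)
  finally have eq: "sum_list (drop (k - 1) (rev (sort (map x [1..<Suc i])))) = sum x (set (take a js))" .
  define L where "L = set (take a js)"
  define R where "R = set (drop a js)"
  have uu: "0 \<le> u j" for j unfolding u_def by simp
  have rhs_nn: "0 \<le> (\<Sum>T\<in>{T. T \<subseteq> {1..i} \<and> card T = k}. \<Prod>j\<in>T. u j)"
    by (intro sum_nonneg prod_nonneg) (simp add: uu)
  show ?thesis
  proof (cases "i \<ge> k - 1")
    case False
    then have "a = 0" unfolding a_def by simp
    then show ?thesis using eq rhs_nn l unfolding u_def by simp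
  next
    case True
    have cR: "card R = k - 1" unfolding R_def using djs ljs True a_def
      by (simp add: distinct_card)
    have LR: "L \<inter> R = {}" "L \<union> R = {1..i}" unfolding L_def R_def
      using djs setjs by (metis append_take_drop_id distinct_append, metis append_take_drop_id set_append)
    have ord: "\<forall>p\<in>L. \<forall>q\<in>R. x p \<le> x q"
    proof -
      have "map x js = map x (take a js) @ map x (drop a js)" by (simp flip: map_append)
      then have "sorted (map x (take a js) @ map x (drop a js))" using srt by simp
      then show ?thesis unfolding L_def R_def sorted_append by auto
    qed
    have finR: "finite R" unfolding R_def by simp
    have key: "x p \<le> l * (\<Prod>j\<in>insert p R. u j)" if p: "p \<in> L" for p
    proof -
      have pI: "p \<in> {1..i}" using p LR by auto
      have xp: "0 \<le> x p" "x p \<le> l" using xb[OF pI] by auto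
      have "u p ^ k = x p / l"
      proof (cases "x p = 0")
        case True then show ?thesis using k by (simp add: u_def)
      next
        case False
        then have pos: "0 < x p / l" using xp l by simp
        have "u p ^ k = ((x p / l) powr (1 / real k)) powr (real k)"
          unfolding u_def using pos by (subst powr_realpow) auto
        also have "\<dots> = x p / l" using k pos xp l by (simp add: powr_powr)
        finally show ?thesis .
      qed
      then have "x p = l * u p ^ k" using l by simp
      also have "u p ^ k = u p * u p ^ (k - 1)" using k
        by (metis Suc_diff_le diff_Suc_1 power_Suc)
      also have "u p ^ (k - 1) = (\<Prod>j\<in>R. u p)" using cR by simp
      also have "(\<Prod>j\<in>R. u p) \<le> (\<Prod>j\<in>R. u j)"
      proof (rule prod_mono)
        fix j assume j: "j \<in> R"
        have "x p \<le> x j" using ord p j by auto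
        then show "0 \<le> u p \<and> u p \<le> u j" unfolding u_def using uu xp l
          by (auto intro!: powr_mono2 divide_right_mono)
      qed
      finally have "x p \<le> l * (u p * (\<Prod>j\<in>R. u j))"
        using l uu by (simp add: mult_left_mono prod_nonneg)
      also have "u p * (\<Prod>j\<in>R. u j) = (\<Prod>j\<in>insert p R. u j)"
        using p LR finR by (subst prod.insert) auto
      finally show ?thesis .
    qed
    have "sum x L \<le> (\<Sum>p\<in>L. l * (\<Prod>j\<in>insert p R. u j))"
      by (rule sum_mono) (rule key)
    also have "\<dots> = l * (\<Sum>T\<in>(\<lambda>p. insert p R) ` L. \<Prod>j\<in>T. u j)"
    proof -
      have "inj_on (\<lambda>p. insert p R) L"
        proof (rule inj_onI)
        fix p q assume "p \<in> L" "q \<in> L" "insert p R = insert q R"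
        then have "p \<in> insert q R" "p \<notin> R" using LR by auto
        then show "p = q" by auto
      qed
      then show ?thesis by (simp add: sum.reindex sum_distrib_left)
    qed
    also have "\<dots> \<le> l * (\<Sum>T\<in>{T. T \<subseteq> {1..i} \<and> card T = k}. \<Prod>j\<in>T. u j)"
    proof (intro mult_left_mono sum_mono2)
      show "finite {T. T \<subseteq> {1..i} \<and> card T = k}" by simp
      show "(\<lambda>p. insert p R) ` L \<subseteq> {T. T \<subseteq> {1..i} \<and> card T = k}"
        using LR cR finR k by (auto simp: card_insert_if)
    qed (use l uu in \<open>auto intro: prod_nonneg\<close>)
    finally show ?thesis using eq unfolding L_def u_def by simp
  qed
qed

lemma prod_indicator_eq:
  fixes f :: "nat \<Rightarrow> real"
  shows "(\<Prod>j\<in>{1..i}. indicator {..l} (f j)) = (if \<forall>j\<in>{1..i}. f j \<le> l then 1 else (0::real))"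
proof (cases "\<forall>j\<in>{1..i}. f j \<le> l")
  case True then show ?thesis by (auto intro!: prod.neutral simp: indicator_def)
next
  case False
  then obtain j where "j \<in> {1..i}" "\<not> f j \<le> l" by auto
  then show ?thesis using False by (intro trans[OF prod_zero]) (auto simp: indicator_def intro!: bexI[of _ j])
qed

theorem lemma3p8:
  fixes M :: "'a measure" and \<sigma>0 :: "'a \<Rightarrow> real" and \<sigma> :: "nat \<Rightarrow> 'a \<Rightarrow> real"
    and k :: nat and ell \<delta> :: "nat \<Rightarrow> real"
  assumes "prob_space M"
    and rv0: "\<sigma>0 \<in> borel_measurable M"
    and pos: "AE \<omega> in M. \<sigma>0 \<omega> > 0"
    and sv: "slowly_varying (\<lambda>u. 1 / \<P>(\<omega> in M. \<sigma>0 \<omega> > u))"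
    and rv: "\<And>i. \<sigma> i \<in> borel_measurable M"
    and indep: "prob_space.indep_vars M (\<lambda>_. borel) \<sigma> UNIV"
    and ident: "\<And>i. distr M borel (\<sigma> i) = distr M borel \<sigma>0"
    and k: "k \<ge> 1"
    and lpos: "\<And>i. ell i > 0" and dpos: "\<And>i. \<delta> i > 0"
    and ltop: "filterlim ell at_top sequentially"
  shows "\<exists>c>0. \<forall>\<^sub>F i in sequentially.
     \<P>(\<omega> in M. S_trim \<sigma> i k \<omega> > ell i * \<delta> i \<bar> (\<forall>j\<in>{1..i}. \<sigma> j \<omega> \<le> ell i))
       < c / \<delta> i * real i ^ k *
         (prob_space.expectation M
            (\<lambda>\<omega>. (\<sigma>0 \<omega> / ell i) powr (1 / real k) * indicator {..ell i} (\<sigma>0 \<omega>))) ^ k"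
proof -
  interpret P: prob_space M by fact
  note rv0[measurable] rv[measurable]
  define D where "D = distr M borel \<sigma>0"
  interpret D: real_distribution D
    unfolding D_def real_distribution_def real_distribution_axioms_def
    by (auto intro!: P.prob_space_distr)
  define g where "g l x = (if 0 < x \<and> x \<le> l then (x / l) powr (1 / real k) else 0)" for l x :: real
  define h where "h l x = (indicator {..l} x :: real)" for l x :: real
  have gm[measurable]: "g l \<in> borel_measurable borel" for l
    unfolding g_def by measurable
  have hm[measurable]: "h l \<in> borel_measurable borel" for l
    unfolding h_def by measurable
  have gb: "0 \<le> g l x \<and> g l x \<le> 1" for l x
    unfolding g_def by (auto intro!: powr_le1)
  have hb: "0 \<le> h l x \<and> h l x \<le> 1" for l x
    unfolding h_def by (auto simp: indicator_def)
  have transfer: "(\<integral>\<omega>. f (\<sigma> j \<omega>) \<partial>M) = (\<integral>x. f x \<partial>D)" if [measurable]: "f \<in> borel_measurable borel" for f :: "real \<Rightarrow> real" and j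
  proof -
    have "(\<integral>\<omega>. f (\<sigma> j \<omega>) \<partial>M) = (\<integral>x. f x \<partial>distr M borel (\<sigma> j))"
      by (rule integral_distr[symmetric]) auto
    then show ?thesis unfolding ident D_def .
  qed
  have posj: "AE \<omega> in M. 0 < \<sigma> j \<omega>" for j
  proof -
    have "AE x in D. 0 < x" unfolding D_def using pos by (subst AE_distr_iff) auto
    then have "AE x in distr M borel (\<sigma> j). 0 < x" unfolding ident D_def .
    then show ?thesis by (subst (asm) AE_distr_iff) auto
  qed
  have intb: "integrable M f" if "f \<in> borel_measurable M" "\<And>\<omega>. 0 \<le> f \<omega> \<and> f \<omega> \<le> 1" for f :: "'a \<Rightarrow> real"
    using that by (intro P.integrable_const_bound[where B=1]) auto
  define p where "p i = measure D {..ell i}" for i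
  define m where "m i = P.expectation (\<lambda>\<omega>. (\<sigma>0 \<omega> / ell i) powr (1 / real k) * indicator {..ell i} (\<sigma>0 \<omega>))" for i
  have p_int: "(\<integral>x. h (ell i) x \<partial>D) = p i" for i
    unfolding h_def p_def by (simp add: D_def)
  have m_int: "(\<integral>x. g (ell i) x \<partial>D) = m i" for i
  proof -
    have "m i = (\<integral>\<omega>. g (ell i) (\<sigma>0 \<omega>) \<partial>M)"
      unfolding m_def
      by (rule integral_cong_AE) (use pos in \<open>auto simp: g_def indicator_def elim!: eventually_mono\<close>)
    also have "\<dots> = (\<integral>x. g (ell i) x \<partial>D)" unfolding D_def by (rule integral_distr[symmetric]) auto
    finally show ?thesis by simp
  qed
  have plim: "(p \<longlongrightarrow> 1) sequentially"
  proof -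
    have "((\<lambda>i. cdf D (ell i)) \<longlongrightarrow> 1) sequentially"
      by (rule filterlim_compose[OF D.cdf_lim_at_top_prob ltop])
    then show ?thesis unfolding p_def cdf_def .
  qed
  have ev: "\<forall>\<^sub>F i in sequentially. 1 / 2 < p i \<and> 1 \<le> i"
  proof -
    have "\<forall>\<^sub>F i in sequentially. 1 / 2 < p i" by (rule order_tendstoD(1)[OF plim]) simp
    then show ?thesis using eventually_ge_at_top[of 1] by eventually_elim auto
  qed
  have "\<exists>c>0. \<forall>\<^sub>F i in sequentially.
     \<P>(\<omega> in M. S_trim \<sigma> i k \<omega> > ell i * \<delta> i \<bar> (\<forall>j\<in>{1..i}. \<sigma> j \<omega> \<le> ell i))
       < c / \<delta> i * real i ^ k * (m i) ^ k"
  proof (intro exI[of _ "2 ^ k + 1"] conjI)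
    show "(0::real) < 2 ^ k + 1" by (simp add: add_pos_nonneg)
    show "\<forall>\<^sub>F i in sequentially.
     \<P>(\<omega> in M. S_trim \<sigma> i k \<omega> > ell i * \<delta> i \<bar> (\<forall>j\<in>{1..i}. \<sigma> j \<omega> \<le> ell i))
       < (2 ^ k + 1) / \<delta> i * real i ^ k * (m i) ^ k"
      using ev
    proof eventually_elim
      case (elim i)
      then have pgt: "1/2 < p i" and i1: "1 \<le> i" by auto
      define l where "l = ell i"
      define d where "d = \<delta> i"
      have l: "0 < l" and d: "0 < d" unfolding l_def d_def using lpos dpos by auto
      define Ts where "Ts = {T. T \<subseteq> {1..i} \<and> card T = k}"
      define F where "F T j x = (if j \<in> T then g l x else h l x)" for T :: "nat set" and j x
      have Fm[measurable]: "F T j \<in> borel_measurable borel" for T j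
        unfolding F_def by (cases "j \<in> T") auto
      have Fb: "0 \<le> F T j x \<and> F T j x \<le> 1" for T j x
        unfolding F_def using gb hb by auto
      define Rv where "Rv \<omega> = (1 / d) * (\<Sum>T\<in>Ts. \<Prod>j\<in>{1..i}. F T j (\<sigma> j \<omega>))" for \<omega>
      have prodF: "integrable M (\<lambda>\<omega>. \<Prod>j\<in>{1..i}. F T j (\<sigma> j \<omega>)) \<and>
          (\<integral>\<omega>. (\<Prod>j\<in>{1..i}. F T j (\<sigma> j \<omega>)) \<partial>M) = (\<Prod>j\<in>{1..i}. \<integral>x. F T j x \<partial>D)" for T
      proof -
        have ind: "P.indep_vars (\<lambda>_. borel) (\<lambda>j \<omega>. F T j (\<sigma> j \<omega>)) {1..i}"
          by (rule P.indep_vars_compose2[OF P.indep_vars_subset[OF indep subset_UNIV]]) auto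
        have it: "integrable M (\<lambda>\<omega>. F T j (\<sigma> j \<omega>))" for j
          by (rule intb) (auto simp: Fb)
        show ?thesis
          using P.indep_vars_lebesgue_integral[OF _ ind it] P.indep_vars_integrable[OF _ ind it]
          by (simp add: transfer)
      qed
      have FT: "(\<Prod>j\<in>{1..i}. \<integral>x. F T j x \<partial>D) = m i ^ k * p i ^ (i - k)" if T: "T \<in> Ts" for T
      proof -
        have Ts: "T \<subseteq> {1..i}" "card T = k" using T unfolding Ts_def by auto
        have "(\<Prod>j\<in>{1..i}. \<integral>x. F T j x \<partial>D) = (\<Prod>j\<in>{1..i}. if j \<in> T then m i else p i)"
          by (intro prod.cong) (auto simp: F_def m_int p_int l_def)
        also have "\<dots> = (\<Prod>j\<in>T. m i) * (\<Prod>j\<in>{1..i} - T. p i)"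
          using Ts by (subst prod.If_cases) (auto simp: Int_absorb1 Diff_eq)
        also have "\<dots> = m i ^ k * p i ^ (i - k)"
        proof -
          have "card ({1..i} - T) = i - k" using Ts by (subst card_Diff_subset) (auto intro: finite_subset)
          then show ?thesis using Ts by simp
        qed
        finally show ?thesis .
      qed
      have Rint: "integrable M Rv"
        unfolding Rv_def using prodF by (intro integrable_mult_right integrable_sum) auto
      have RvI: "(\<integral>\<omega>. Rv \<omega> \<partial>M) = (1 / d) * (real (i choose k) * (m i ^ k * p i ^ (i - k)))"
      proof -
        have "(\<integral>\<omega>. Rv \<omega> \<partial>M) = (1 / d) * (\<Sum>T\<in>Ts. \<integral>\<omega>. (\<Prod>j\<in>{1..i}. F T j (\<sigma> j \<omega>)) \<partial>M)"
          unfolding Rv_def integral_mult_right_zero by (subst Bochner_Integration.integral_sum) (use prodF in auto)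
        also have "\<dots> = (1 / d) * (\<Sum>T\<in>Ts. m i ^ k * p i ^ (i - k))"
          using prodF FT by simp
        also have "\<dots> = (1 / d) * (real (i choose k) * (m i ^ k * p i ^ (i - k)))"
          by (simp add: Ts_def n_subsets)
        finally show ?thesis .
      qed
      define E where "E = {\<omega> \<in> space M. S_trim \<sigma> i k \<omega> > ell i * \<delta> i \<and> (\<forall>j\<in>{1..i}. \<sigma> j \<omega> \<le> ell i)}"
      define B where "B = {\<omega> \<in> space M. \<forall>j\<in>{1..i}. \<sigma> j \<omega> \<le> ell i}"
      have Rnn: "0 \<le> Rv \<omega>" for \<omega>
        unfolding Rv_def using d Fb by (intro mult_nonneg_nonneg sum_nonneg prod_nonneg) auto
      have AEle: "AE \<omega> in M. indicator E \<omega> \<le> Rv \<omega>"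
      proof -
        have "AE \<omega> in M. \<forall>j\<in>{1..i}. 0 < \<sigma> j \<omega>"
          by (rule AE_finite_allI) (auto intro: posj)
        then show ?thesis
      proof eventually_elim
        case (elim \<omega>)
        show ?case
        proof (cases "\<omega> \<in> E")
          case False then show ?thesis using Rnn by simp
        next
          case True
          then have S: "S_trim \<sigma> i k \<omega> > l * d" and le: "\<forall>j\<in>{1..i}. \<sigma> j \<omega> \<le> l"
            unfolding E_def l_def d_def by auto
          have xb: "\<And>j. j \<in> {1..i} \<Longrightarrow> 0 \<le> \<sigma> j \<omega> \<and> \<sigma> j \<omega> \<le> l"
            using le elim by (auto intro: less_imp_le)
          have "(\<Prod>j\<in>{1..i}. F T j (\<sigma> j \<omega>)) = (\<Prod>j\<in>T. (\<sigma> j \<omega> / l) powr (1 / real k))"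
            if T: "T \<in> Ts" for T
          proof -
            have Ts: "T \<subseteq> {1..i}" using T unfolding Ts_def by auto
            have "(\<Prod>j\<in>{1..i}. F T j (\<sigma> j \<omega>)) = (\<Prod>j\<in>{1..i}. if j \<in> T then (\<sigma> j \<omega> / l) powr (1 / real k) else 1)"
              using le elim by (intro prod.cong) (auto simp: F_def g_def h_def)
            also have "\<dots> = (\<Prod>j\<in>T. (\<sigma> j \<omega> / l) powr (1 / real k))"
              using Ts by (subst prod.If_cases) (auto simp: Int_absorb1)
            finally show ?thesis .
          qed
          then have "d * Rv \<omega> = (\<Sum>T\<in>Ts. \<Prod>j\<in>T. (\<sigma> j \<omega> / l) powr (1 / real k))"
            unfolding Rv_def using d by simp
          moreover have "S_trim \<sigma> i k \<omega> \<le> l * (\<Sum>T\<in>Ts. \<Prod>j\<in>T. (\<sigma> j \<omega> / l) powr (1 / real k))"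
            unfolding S_trim_def trimmed_sum_def Ts_def
            by (rule trim_comb[OF k l xb])
          ultimately have "l * d < l * (d * Rv \<omega>)" using S by simp
          then have "1 < Rv \<omega>" using l d by simp
          then show ?thesis by (simp add: indicator_def)
        qed
      qed
      qed
      have mE: "measure M E \<le> (1 / d) * (real (i choose k) * (m i ^ k * p i ^ (i - k)))"
      proof -
        have "measure M E = (\<integral>\<omega>. indicator E \<omega> \<partial>M)"
          by (simp add: E_def Int_absorb2)
        also have "\<dots> \<le> (\<integral>\<omega>. Rv \<omega> \<partial>M)"
          by (rule integral_mono_AE'[OF Rint AEle]) (simp add: Rnn)
        finally show ?thesis using RvI by simp
      qed
      have mB: "measure M B = p i ^ i"
      proof -
        have "measure M B = (\<integral>\<omega>. indicator B \<omega> \<partial>M)"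
          by (simp add: B_def Int_absorb2)
        also have "\<dots> = (\<integral>\<omega>. (\<Prod>j\<in>{1..i}. F {} j (\<sigma> j \<omega>)) \<partial>M)"
        proof (rule Bochner_Integration.integral_cong[OF refl])
          fix \<omega> assume "\<omega> \<in> space M"
          then show "indicator B \<omega> = (\<Prod>j\<in>{1..i}. F {} j (\<sigma> j \<omega>))"
            using prod_indicator_eq[of l "\<lambda>j. \<sigma> j \<omega>" i]
            by (simp add: B_def F_def h_def l_def indicator_def)
        qed
        also have "\<dots> = (\<Prod>j\<in>{1..i}. \<integral>x. F {} j x \<partial>D)" using prodF by blast
        also have "\<dots> = p i ^ i" by (simp add: F_def p_int l_def)
        finally show ?thesis .
      qed
      have mpos: "0 < m i"
      proof -
        have mnn: "0 \<le> m i" unfolding m_int[symmetric] using gb by (simp add: integral_nonneg)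
        show ?thesis
        proof (rule ccontr)
          assume "\<not> 0 < m i"
          then have "(\<integral>x. g (ell i) x \<partial>D) = 0" using mnn m_int by simp
          then have "AE x in D. g (ell i) x = 0"
            using gb by (subst (asm) integral_nonneg_eq_0_iff_AE) (auto intro: D.integrable_const_bound[where B=1])
          moreover have "AE x in D. 0 < x" unfolding D_def using pos by (subst AE_distr_iff) auto
          ultimately have "AE x in D. h (ell i) x = 0"
          proof eventually_elim
            case (elim x)
            then show ?case using lpos[of i]
              by (auto simp: g_def h_def indicator_def split: if_splits)
          qed
          then have "(\<integral>x. h (ell i) x \<partial>D) = (\<integral>x. 0 \<partial>D)"
            by (intro integral_cong_AE) auto
          then have "p i = 0" using p_int by simp
          then show False using pgt by simp
        qed
      qed
      have cp: "\<P>(\<omega> in M. S_trim \<sigma> i k \<omega> > ell i * \<delta> i \<bar> (\<forall>j\<in>{1..i}. \<sigma> j \<omega> \<le> ell i))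
          = measure M E / measure M B"
        unfolding cond_prob_def E_def B_def by simp
      have pp: "0 < p i" using pgt by simp
      have key: "real (i choose k) * p i ^ (i - k) \<le> real i ^ k * 2 ^ k * p i ^ i"
      proof (cases "k \<le> i")
        case False then show ?thesis using pp by (simp add: binomial_eq_0)
      next
        case True
        have "p i ^ i = p i ^ (i - k) * p i ^ k" using True by (simp flip: power_add)
        moreover have "1 \<le> (2 * p i) ^ k" using pgt by (intro one_le_power) simp
        ultimately have "p i ^ (i - k) \<le> 2 ^ k * p i ^ i"
        proof -
          assume a1: "p i ^ i = p i ^ (i - k) * p i ^ k" and a2: "1 \<le> (2 * p i) ^ k"
          have "p i ^ (i - k) = p i ^ (i - k) * 1" by simp
          also have "\<dots> \<le> p i ^ (i - k) * (2 * p i) ^ k"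
            using a2 pp by (intro mult_left_mono) auto
          also have "\<dots> = 2 ^ k * p i ^ i" unfolding a1 power_mult_distrib by (simp add: ac_simps)
          finally show ?thesis .
        qed
        moreover have "real (i choose k) \<le> real i ^ k"
          using binomial_le_pow[OF True] by (metis of_nat_le_iff of_nat_power)
        ultimately show ?thesis using pp
          by (simp add: mult_mono mult.assoc)
      qed
      have "measure M E / measure M B \<le> (1 / d) * (real i ^ k * 2 ^ k * m i ^ k)"
      proof -
        have "measure M E \<le> (1 / d) * (m i ^ k * (real (i choose k) * p i ^ (i - k)))"
          using mE by (simp add: mult_ac)
        also have "\<dots> \<le> (1 / d) * (m i ^ k * (real i ^ k * 2 ^ k * p i ^ i))"
          using key d mpos by (intro mult_left_mono) auto
        finally show ?thesis using mB pp by (simp add: divide_le_eq mult_ac)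
      qed
      also have "\<dots> < (2 ^ k + 1) / d * real i ^ k * m i ^ k"
        using d mpos i1 by (simp add: field_simps)
      finally show ?case unfolding cp d_def .
    qed
  qed
  then show ?thesis unfolding m_def .
qed

end
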